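(* Let $r\ge 2$ and let $H$ be an $r$-uniform hypergraph with maximum degree $\Delta=\Delta(H)$. Then $$\chi_{\nleftrightarrow}(H)\ \le\ \left\lceil r\,\Delta^{1/r}\right\rceil .$$
   Context: For a hypergraph $H$ and a vertex $v$, $E(v)$ denotes the set of edges containing $v$. A local $k$-partition of an $r$-uniform hypergraph $H$ is a collection $\{c_v\}_{v\in V(H)}$ of maps $c_v:E(v)\to\{1,\dots,k\}$. $H$ is conflict $\{c_v\}$-colorable if there is a map $\varphi:V(H)\to\{1,\dots,k\}$ such that no edge $e=\{u_1,\dots,u_r\}$ satisfies $\varphi(u_i)=c_{u_i}(e)$ for all $i=1,\dots,r$. The single conflict chromatic number $\chi_{\nleftrightarrow}(H)$ is the smallest $k$ such that $H$ is conflict $\{c_v\}$-colorable for every local $k$-partition $\{c_v\}$ of $H$. *)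

theory Defs
  imports Complex_Main
begin

definition uniform_hypergraph :: "nat \<Rightarrow> 'a set \<Rightarrow> 'a set set \<Rightarrow> bool" where
  "uniform_hypergraph r V E \<longleftrightarrow> finite V \<and> (\<forall>e\<in>E. e \<subseteq> V \<and> card e = r)"

definition edges_at :: "'a set set \<Rightarrow> 'a \<Rightarrow> 'a set set" where
  "edges_at E v = {e \<in> E. v \<in> e}"

definition hdegree :: "'a set set \<Rightarrow> 'a \<Rightarrow> nat" where
  "hdegree E v = card (edges_at E v)"

definition max_degree :: "'a set \<Rightarrow> 'a set set \<Rightarrow> nat" where
  "max_degree V E = Max (insert 0 (hdegree E ` V))"

text \<open>A local k-partition: for every vertex v a map c v : E(v) \<rightarrow> {1..k}
  (values of c v outside E(v) are irrelevant).\<close>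
definition local_partition :: "nat \<Rightarrow> 'a set \<Rightarrow> 'a set set \<Rightarrow> ('a \<Rightarrow> 'a set \<Rightarrow> nat) \<Rightarrow> bool" where
  "local_partition k V E c \<longleftrightarrow> (\<forall>v\<in>V. \<forall>e\<in>edges_at E v. c v e \<in> {1..k})"

definition conflict_colorable :: "nat \<Rightarrow> 'a set \<Rightarrow> 'a set set \<Rightarrow> ('a \<Rightarrow> 'a set \<Rightarrow> nat) \<Rightarrow> bool" where
  "conflict_colorable k V E c \<longleftrightarrow>
     (\<exists>\<phi>. (\<forall>v\<in>V. \<phi> v \<in> {1..k}) \<and> \<not> (\<exists>e\<in>E. \<forall>u\<in>e. \<phi> u = c u e))"

definition single_conflict_chromatic :: "'a set \<Rightarrow> 'a set set \<Rightarrow> nat" where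
  "single_conflict_chromatic V E =
     (LEAST k. k \<ge> 1 \<and> (\<forall>c. local_partition k V E c \<longrightarrow> conflict_colorable k V E c))"

end

theory Submission
  imports Defs "HOL-Library.FuncSet"
begin

definition goodc :: "nat \<Rightarrow> 'a set set \<Rightarrow> ('a \<Rightarrow> 'a set \<Rightarrow> nat) \<Rightarrow> 'a set \<Rightarrow> ('a \<Rightarrow> nat) set" where
  "goodc k E c S = {\<phi> \<in> PiE S (\<lambda>_. {1..k}). \<forall>e\<in>E. e \<subseteq> S \<longrightarrow> \<not> (\<forall>u\<in>e. \<phi> u = c u e)}"

lemma goodc_finite: "finite S \<Longrightarrow> finite (goodc k E c S)"
  unfolding goodc_def by (rule finite_subset[of _ "PiE S (\<lambda>_. {1..k})"]) (auto intro: finite_PiE)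

context
  fixes k :: nat and V :: "'a set" and E :: "'a set set" and c :: "'a \<Rightarrow> 'a set \<Rightarrow> nat"
    and lam :: real
  assumes lam_pos: "lam > 0"
    and finV: "finite V"
begin

abbreviation C :: "'a set \<Rightarrow> real" where "C S \<equiv> real (card (goodc k E c S))"

lemma chain:
  assumes H: "\<forall>X w. X \<subseteq> V \<and> w \<in> V \<and> w \<notin> X \<and> card X < N \<longrightarrow> lam * C X \<le> C (insert w X)"
  assumes "finite D"
  shows "D \<inter> T = {} \<Longrightarrow> T \<union> D \<subseteq> V \<Longrightarrow> card (T \<union> D) \<le> N \<Longrightarrow> lam ^ card D * C T \<le> C (T \<union> D)"
  using assms(2)
proof (induction D rule: finite_induct)
  case empty
  then show ?case by simp
next
  case (insert w D)
  have eq: "T \<union> insert w D = insert w (T \<union> D)" by auto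
  have finTD: "finite (T \<union> D)"
    using insert.prems(2) finV eq finite_subset by fastforce
  have wn: "w \<notin> T \<union> D" using insert.hyps(2) insert.prems(1) by blast
  have cardlt: "card (T \<union> D) < N"
    using insert.prems(3) finTD wn eq by simp
  have IH: "lam ^ card D * C T \<le> C (T \<union> D)"
    apply (rule insert.IH)
    using insert.prems cardlt by auto
  have "lam ^ card (insert w D) * C T = lam * (lam ^ card D * C T)"
    using insert.hyps by simp
  also have "\<dots> \<le> lam * C (T \<union> D)" using IH lam_pos by simp
  also have "\<dots> \<le> C (insert w (T \<union> D))"
    apply (rule H[rule_format])
    using insert.prems(2) cardlt wn eq by auto
  finally show ?case by (simp add: eq)
qed

lemma one_step:
  assumes unif: "uniform_hypergraph r V E" and r2: "r \<ge> 2"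
    and lamr: "lam ^ r = real (max_degree V E)" and kge: "real k \<ge> 2 * lam"
    and H: "\<forall>X w. X \<subseteq> V \<and> w \<in> V \<and> w \<notin> X \<and> card X < card S \<longrightarrow> lam * C X \<le> C (insert w X)"
    and SV: "S \<subseteq> V" and vV: "v \<in> V" and vS: "v \<notin> S"
  shows "lam * C S \<le> C (insert v S)"
proof -
  have finS: "finite S" using SV finV finite_subset by blast
  have Esub: "\<And>e. e \<in> E \<Longrightarrow> e \<subseteq> V \<and> card e = r" using unif unfolding uniform_hypergraph_def by blast
  have finE: "finite E"
    by (rule finite_subset[of _ "Pow V"]) (use Esub finV in auto)
  define Ev where "Ev = {e\<in>E. v \<in> e \<and> e \<subseteq> insert v S}"
  have finEv: "finite Ev" using finE unfolding Ev_def by simp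
  define G where "G = goodc k E c S"
  have finG: "finite G" using goodc_finite finS unfolding G_def by blast
  define extf where "extf = (\<lambda>(\<phi>::'a \<Rightarrow> nat, i::nat). \<phi>(v:=i))"
  define Ext where "Ext = extf ` (G \<times> {1..k})"
  have finExt: "finite Ext" unfolding Ext_def using finG by simp
  have inj: "inj_on extf (G \<times> {1..k})"
  proof (rule inj_onI)
    fix a b assume a: "a \<in> G \<times> {1..k}" and b: "b \<in> G \<times> {1..k}" and eq: "extf a = extf b"
    obtain \<phi>1 i1 where a1: "a = (\<phi>1, i1)" by (cases a)
    obtain \<phi>2 i2 where b1: "b = (\<phi>2, i2)" by (cases b)
    have p1: "\<phi>1 \<in> PiE S (\<lambda>_. {1..k})" using a a1 unfolding G_def goodc_def by simp
    have p2: "\<phi>2 \<in> PiE S (\<lambda>_. {1..k})" using b b1 unfolding G_def goodc_def by simp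
    have e2: "\<phi>1(v:=i1) = \<phi>2(v:=i2)" using eq a1 b1 unfolding extf_def by simp
    have "i1 = i2" using fun_cong[OF e2, of v] by simp
    moreover have "\<phi>1 = \<phi>2"
    proof (rule ext)
      fix x show "\<phi>1 x = \<phi>2 x"
      proof (cases "x = v")
        case True
        then show ?thesis using PiE_arb[OF p1 vS] PiE_arb[OF p2 vS] by simp
      next
        case False
        then have "(\<phi>1(v:=i1)) x = \<phi>1 x" "(\<phi>2(v:=i2)) x = \<phi>2 x" by auto
        then show ?thesis using fun_cong[OF e2, of x] by simp
      qed
    qed
    ultimately show "a = b" using a1 b1 by simp
  qed
  have cardExt: "card Ext = card G * k"
    unfolding Ext_def using card_image[OF inj] by (simp add: card_cartesian_product)
  have ExtPi: "Ext \<subseteq> PiE (insert v S) (\<lambda>_. {1..k})"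
  proof
    fix \<psi> assume "\<psi> \<in> Ext"
    then obtain \<phi> i where pi: "\<phi> \<in> G" "i \<in> {1..k}" and ps: "\<psi> = \<phi>(v:=i)"
      unfolding Ext_def extf_def by auto
    have p1: "\<phi> \<in> PiE S (\<lambda>_. {1..k})"
      using pi unfolding G_def goodc_def by auto
    show "\<psi> \<in> PiE (insert v S) (\<lambda>_. {1..k})"
      unfolding ps using pi(2) p1 by (rule PiE_fun_upd)
  qed
  define Bad where "Bad = (\<lambda>e. {\<psi>\<in>Ext. \<forall>u\<in>e. \<psi> u = c u e})"
  have sub_good: "Ext - \<Union>(Bad ` Ev) \<subseteq> goodc k E c (insert v S)"
  proof
    fix \<psi> assume \<psi>: "\<psi> \<in> Ext - \<Union>(Bad ` Ev)"
    then obtain \<phi> i where pi: "\<phi> \<in> G" "i \<in> {1..k}" and ps: "\<psi> = \<phi>(v:=i)"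
      unfolding Ext_def extf_def by auto
    have p1: "\<phi> \<in> PiE S (\<lambda>_. {1..k})" and gd: "\<forall>e\<in>E. e \<subseteq> S \<longrightarrow> \<not> (\<forall>u\<in>e. \<phi> u = c u e)"
      using pi unfolding G_def goodc_def by auto
    have "\<psi> \<in> PiE (insert v S) (\<lambda>_. {1..k})"
      using p1 pi(2) ps vS by (auto simp: PiE_iff extensional_def)
    moreover have "\<forall>e\<in>E. e \<subseteq> insert v S \<longrightarrow> \<not> (\<forall>u\<in>e. \<psi> u = c u e)"
    proof (intro ballI impI)
      fix e assume eE: "e \<in> E" and es: "e \<subseteq> insert v S"
      show "\<not> (\<forall>u\<in>e. \<psi> u = c u e)"
      proof (cases "v \<in> e")
        case True
        then have "e \<in> Ev" unfolding Ev_def using eE es by simp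
        then show ?thesis using \<psi> unfolding Bad_def by auto
      next
        case False
        then have "e \<subseteq> S" using es by auto
        then have "\<not> (\<forall>u\<in>e. \<phi> u = c u e)" using gd eE by blast
        then show ?thesis using False ps by auto
      qed
    qed
    ultimately show "\<psi> \<in> goodc k E c (insert v S)" unfolding goodc_def by simp
  qed
  have finIns: "finite (insert v S)" using finS by simp
  have bad_bound: "real (card (Bad e)) * lam ^ (r - 1) \<le> C S" if eEv: "e \<in> Ev" for e
  proof -
    have eE: "e \<in> E" and ve: "v \<in> e" and es: "e \<subseteq> insert v S" using eEv unfolding Ev_def by auto
    have ce: "card e = r" using Esub eE by blast
    have finE': "finite e" using es finIns finite_subset by blast
    have inter: "S \<inter> e = e - {v}" using es vS ve by auto
    have cSe: "card (S \<inter> e) = r - 1" using inter ce finE' ve by simp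
    define rs where "rs = (\<lambda>\<psi>::'a\<Rightarrow>nat. restrict \<psi> (S - e))"
    have injr: "inj_on rs (Bad e)"
    proof (rule inj_onI)
      fix \<psi>1 \<psi>2 assume b1: "\<psi>1 \<in> Bad e" and b2: "\<psi>2 \<in> Bad e" and eq: "rs \<psi>1 = rs \<psi>2"
      have x1: "\<psi>1 \<in> PiE (insert v S) (\<lambda>_. {1..k})" and x2: "\<psi>2 \<in> PiE (insert v S) (\<lambda>_. {1..k})"
        using b1 b2 ExtPi unfolding Bad_def by auto
      show "\<psi>1 = \<psi>2"
      proof (rule ext)
        fix x
        show "\<psi>1 x = \<psi>2 x"
        proof (cases "x \<in> e")
          case True then show ?thesis using b1 b2 unfolding Bad_def by auto
        next
          case False
          show ?thesis
          proof (cases "x \<in> S")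
            case True
            then show ?thesis using fun_cong[OF eq, of x] False unfolding rs_def by simp
          next
            case False2: False
            then have "x \<notin> insert v S" using False ve by auto
            then show ?thesis using PiE_arb[OF x1] PiE_arb[OF x2] by simp
          qed
        qed
      qed
    qed
    have imgr: "rs ` Bad e \<subseteq> goodc k E c (S - e)"
    proof
      fix \<chi> assume "\<chi> \<in> rs ` Bad e"
      then obtain \<psi> where pb: "\<psi> \<in> Bad e" and ch: "\<chi> = rs \<psi>" by blast
      then obtain \<phi> i where pi: "\<phi> \<in> G" "i \<in> {1..k}" and ps: "\<psi> = \<phi>(v:=i)"
        unfolding Bad_def Ext_def extf_def by auto
      have p1: "\<phi> \<in> PiE S (\<lambda>_. {1..k})" and gd: "\<forall>e\<in>E. e \<subseteq> S \<longrightarrow> \<not> (\<forall>u\<in>e. \<phi> u = c u e)"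
        using pi unfolding G_def goodc_def by auto
      have psP: "\<psi> \<in> PiE (insert v S) (\<lambda>_. {1..k})" using pb ExtPi unfolding Bad_def by auto
      have "\<forall>x\<in>S - e. \<psi> x \<in> {1..k}" using PiE_mem[OF psP] by blast
      then have "\<chi> \<in> PiE (S - e) (\<lambda>_. {1..k})"
        unfolding ch rs_def by (simp only: restrict_PiE_iff)
      moreover have "\<forall>e'\<in>E. e' \<subseteq> S - e \<longrightarrow> \<not> (\<forall>u\<in>e'. \<chi> u = c u e')"
      proof (intro ballI impI)
        fix e' assume e'E: "e' \<in> E" and e's: "e' \<subseteq> S - e"
        have "\<not> (\<forall>u\<in>e'. \<phi> u = c u e')" using gd e'E e's by blast
        then obtain u where "u \<in> e'" "\<phi> u \<noteq> c u e'" by blast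
        moreover have "\<chi> u = \<phi> u" using \<open>u \<in> e'\<close> e's ch ps vS unfolding rs_def by auto
        ultimately show "\<not> (\<forall>u\<in>e'. \<chi> u = c u e')" by metis
      qed
      ultimately show "\<chi> \<in> goodc k E c (S - e)" unfolding goodc_def by simp
    qed
    have c1: "card (Bad e) \<le> card (goodc k E c (S - e))"
    proof -
      have "card (Bad e) = card (rs ` Bad e)" using card_image[OF injr] by simp
      also have "\<dots> \<le> card (goodc k E c (S - e))"
        by (rule card_mono[OF goodc_finite imgr]) (use finS in simp)
      finally show ?thesis .
    qed
    have ch: "lam ^ card (S \<inter> e) * C (S - e) \<le> C ((S - e) \<union> (S \<inter> e))"
    proof (rule chain[OF H])
      show "finite (S \<inter> e)" using finS by simp
      show "S \<inter> e \<inter> (S - e) = {}" by blast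
      show "S - e \<union> S \<inter> e \<subseteq> V" using SV by blast
      have "S - e \<union> S \<inter> e = S" by blast
      then show "card (S - e \<union> S \<inter> e) \<le> card S" by simp
    qed
    have "(S - e) \<union> (S \<inter> e) = S" by auto
    then have "lam ^ (r - 1) * C (S - e) \<le> C S" using ch cSe by simp
    moreover have "real (card (Bad e)) * lam ^ (r - 1) \<le> C (S - e) * lam ^ (r - 1)"
      using c1 lam_pos by simp
    ultimately show ?thesis by (simp add: mult.commute)
  qed
  have cEv: "card Ev \<le> max_degree V E"
  proof -
    have "Ev \<subseteq> edges_at E v" unfolding Ev_def edges_at_def by auto
    then have "card Ev \<le> hdegree E v" unfolding hdegree_def
      by (rule card_mono[rotated]) (use finE in \<open>simp add: edges_at_def\<close>)
    also have "\<dots> \<le> max_degree V E" unfolding max_degree_def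
      using vV finV by (intro Max_ge) auto
    finally show ?thesis .
  qed
  have rr: "r = Suc (r - 1)" using r2 by simp
  have lampow: "lam ^ r = lam * lam ^ (r - 1)" by (subst rr) simp
  have lpos: "lam ^ (r - 1) > 0" using lam_pos by simp
  have sumb: "(\<Sum>e\<in>Ev. real (card (Bad e))) \<le> lam * C S"
  proof -
    have "(\<Sum>e\<in>Ev. real (card (Bad e))) \<le> (\<Sum>e\<in>Ev. C S / lam ^ (r - 1))"
      apply (rule sum_mono)
      using bad_bound lpos by (simp add: pos_le_divide_eq)
    also have "\<dots> = real (card Ev) * C S / lam ^ (r - 1)" by simp
    also have "\<dots> \<le> real (max_degree V E) * C S / lam ^ (r - 1)"
      using cEv lpos by (intro divide_right_mono mult_right_mono) auto
    also have "\<dots> = lam * lam ^ (r - 1) * C S / lam ^ (r - 1)" using lamr lampow by simp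
    also have "\<dots> = lam * C S" using lpos by simp
    finally show ?thesis .
  qed
  have "real (card Ext) \<le> real (card (Ext - \<Union>(Bad ` Ev))) + real (card (\<Union>(Bad ` Ev)))"
  proof -
    have "card Ext \<le> card (Ext - \<Union>(Bad ` Ev)) + card (\<Union>(Bad ` Ev))"
    proof -
      let ?U = "\<Union>(Bad ` Ev)"
      have finU: "finite ?U" using finEv finExt unfolding Bad_def by auto
      have "card Ext \<le> card ((Ext - ?U) \<union> ?U)"
        by (rule card_mono) (use finU finExt in auto)
      also have "\<dots> \<le> card (Ext - ?U) + card ?U" by (rule card_Un_le)
      finally show ?thesis .
    qed
    then show ?thesis by linarith
  qed
  also have "real (card (\<Union>(Bad ` Ev))) \<le> (\<Sum>e\<in>Ev. real (card (Bad e)))"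
    using card_UN_le[OF finEv, of Bad] by (metis of_nat_le_iff of_nat_sum)
  also have "real (card (Ext - \<Union>(Bad ` Ev))) \<le> C (insert v S)"
    using card_mono[OF goodc_finite[OF finIns] sub_good] by simp
  finally have "real (card Ext) \<le> C (insert v S) + lam * C S" using sumb by linarith
  moreover have "real (card Ext) = C S * real k" using cardExt G_def by simp
  moreover have "C S * real k \<ge> C S * (2 * lam)" using kge by (intro mult_left_mono) auto
  moreover have "C S * (2 * lam) = 2 * (lam * C S)" by simp
  ultimately show ?thesis by linarith
qed

lemma all_step:
  assumes unif: "uniform_hypergraph r V E" and r2: "r \<ge> 2"
    and lamr: "lam ^ r = real (max_degree V E)" and kge: "real k \<ge> 2 * lam"
  shows "S \<subseteq> V \<Longrightarrow> v \<in> V \<Longrightarrow> v \<notin> S \<Longrightarrow> lam * C S \<le> C (insert v S)"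
proof (induction "card S" arbitrary: S v rule: less_induct)
  case less
  show ?case
  proof (rule one_step[OF unif r2 lamr kge])
    show "\<forall>X w. X \<subseteq> V \<and> w \<in> V \<and> w \<notin> X \<and> card X < card S \<longrightarrow> lam * C X \<le> C (insert w X)"
      using less.hyps by blast
  qed (use less.prems in auto)
qed

lemma good_exists:
  assumes unif: "uniform_hypergraph r V E" and r2: "r \<ge> 2"
    and lamr: "lam ^ r = real (max_degree V E)" and kge: "real k \<ge> 2 * lam"
  shows "goodc k E c V \<noteq> {}"
proof -
  have H: "\<forall>X w. X \<subseteq> V \<and> w \<in> V \<and> w \<notin> X \<and> card X < Suc (card V) \<longrightarrow> lam * C X \<le> C (insert w X)"
    using all_step[OF unif r2 lamr kge] by blast
  have ch: "lam ^ card V * C {} \<le> C ({} \<union> V)"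
    by (rule chain[OF H finV]) auto
  have ne: "\<And>e. e \<in> E \<Longrightarrow> e \<noteq> {}" using unif r2 unfolding uniform_hypergraph_def by fastforce
  have "goodc k E c {} = {\<lambda>_. undefined}"
    unfolding goodc_def using ne by auto
  then have "C {} = 1" by simp
  then have "C V > 0" using ch lam_pos
    by (metis Un_empty_left less_le_trans mult.right_neutral zero_less_power)
  then show ?thesis by (metis card.empty of_nat_0 less_irrefl)
qed

end

theorem proposition2p2:
  fixes r :: nat and V :: "'a set" and E :: "'a set set"
  assumes "r \<ge> 2"
    and "uniform_hypergraph r V E"
    and "E \<noteq> {}"
  shows "real (single_conflict_chromatic V E)
           \<le> real_of_int \<lceil>real r * real (max_degree V E) powr (1 / real r)\<rceil>"
proof -
  define D where "D = max_degree V E"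
  define lam where "lam = real D powr (1 / real r)"
  define k where "k = nat \<lceil>real r * lam\<rceil>"
  have finV: "finite V" using assms(2) unfolding uniform_hypergraph_def by blast
  obtain e where eE: "e \<in> E" using assms(3) by blast
  have eV: "e \<subseteq> V" and ce: "card e = r" using assms(2) eE unfolding uniform_hypergraph_def by auto
  have "e \<noteq> {}" using ce assms(1) by auto
  then obtain v where ve: "v \<in> e" by blast
  have vV: "v \<in> V" using ve eV by blast
  have finE: "finite E"
    by (rule finite_subset[of _ "Pow V"]) (use assms(2) finV in \<open>auto simp: uniform_hypergraph_def\<close>)
  have "hdegree E v \<ge> 1"
  proof -
    have "e \<in> edges_at E v" unfolding edges_at_def using eE ve by simp
    moreover have "finite (edges_at E v)" using finE unfolding edges_at_def by simp
    ultimately show ?thesis unfolding hdegree_def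
      by (metis One_nat_def Suc_leI card_gt_0_iff empty_iff)
  qed
  also have "hdegree E v \<le> D" unfolding D_def max_degree_def
    using vV finV by (intro Max_ge) auto
  finally have D1: "D \<ge> 1" .
  have Dpos: "real D > 0" using D1 by simp
  have rpos: "real r > 0" using assms(1) by simp
  have lam_pos: "lam > 0" unfolding lam_def using Dpos by simp
  have lamr: "lam ^ r = real D"
  proof -
    have "lam ^ r = lam powr real r" using lam_pos by (simp add: powr_realpow)
    also have "\<dots> = real D powr (1 / real r * real r)" unfolding lam_def by (simp add: powr_powr)
    also have "\<dots> = real D" using rpos Dpos by simp
    finally show ?thesis .
  qed
  have rl: "real r * lam \<ge> 2 * lam" using assms(1) lam_pos by (intro mult_right_mono) auto
  have kr: "real k = real_of_int \<lceil>real r * lam\<rceil>" unfolding k_def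
    using rl lam_pos by (simp add: of_nat_nat)
  have kge: "real k \<ge> 2 * lam" using kr rl by linarith
  have k1: "k \<ge> 1" using kge lam_pos by linarith
  have col: "\<forall>c. local_partition k V E c \<longrightarrow> conflict_colorable k V E c"
  proof (intro allI impI)
    fix c
    have "goodc k E c V \<noteq> {}"
      using good_exists[OF lam_pos finV assms(2) assms(1)] lamr kge unfolding D_def by blast
    then obtain \<phi> where \<phi>: "\<phi> \<in> goodc k E c V" by blast
    have a1: "\<forall>v\<in>V. \<phi> v \<in> {1..k}" using \<phi> unfolding goodc_def by auto
    have a2: "\<not> (\<exists>e\<in>E. \<forall>u\<in>e. \<phi> u = c u e)"
      using \<phi> assms(2) unfolding goodc_def uniform_hypergraph_def by blast
    show "conflict_colorable k V E c" unfolding conflict_colorable_def using a1 a2 by blast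
  qed
  have "single_conflict_chromatic V E \<le> k"
    unfolding single_conflict_chromatic_def by (rule Least_le) (use k1 col in blast)
  then have "real (single_conflict_chromatic V E) \<le> real k" by simp
  then show ?thesis using kr unfolding lam_def D_def by simp
qed

end
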